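(* For all $0<q<1$, the Chern character of the Fredholm module $(\mathcal{A}(S^2_q),\mathcal{H},F)$ associated to the spectral triple $(\mathcal{A}(S^2_q),\mathcal{H},D)$ pairs with the class of the projector $$p'=\frac{1}{2}\begin{pmatrix}1+b & a^* \\ a & 1-q^{-2}b\end{pmatrix}\in\mathcal{A}(S^2_q)\otimes\mathrm{Mat}_2(\mathbb{C})$$ to give $\mathrm{ch}^F([p'])=-1$. In particular the Chern character of this spectral triple is non-trivial.
   Context: Let $0<q<1$ and let $\mathcal{A}(S^2_q)$ be the $*$-algebra of the equatorial Podleś sphere, generated by $a,a^*$ and $b=b^*$ with relations $ba=q^2ab$, $a^*a+b^2=1$, $q^4aa^*+b^2=q^4$. Let $\hat{\mathcal{H}}$ be the Hilbert space with orthonormal basis $\ket{l,m}$, $l\in\mathbb{N}+\tfrac12$, $m=-l,\dots,l$, and $\mathcal{H}=\hat{\mathcal{H}}\otimes\mathbb{C}^2=\mathcal{H}_+\oplus\mathcal{H}_-$. Let $\pi=\pi_+\oplus\pi_-$ be the spin representation of Dąbrowski–Landi–Paschke–Sitarz, where with $[x]=(q^x-q^{-x})/(q-q^{-1})$, $\pi_\pm(a)\ket{l,m}=q^{m-l-\frac12}\frac{\sqrt{[l+m+1][l+m+2]}}{[2l+2]}\ket{l+1,m+1}-q^{m+l+\frac12}\frac{\sqrt{[l-m-1][l-m]}}{[2l]}\ket{l-1,m+1}\pm\frac{(1+q^2)q^{m-\frac12}}{[2l][2l+2]}\sqrt{[l+m+1][l-m]}\ket{l,m+1}$, $\pi_\pm(b)\ket{l,m}=-q^{m+1}\frac{\sqrt{[l+m+1][l-m+1]}}{[2l+2]}\ket{l+1,m}-q^{m+1}\frac{\sqrt{[l+m][l-m]}}{[2l]}\ket{l-1,m}\pm\frac{[l-m+1][l+m]-q^2[l-m][l+m+1]}{[2l][2l+2]}\ket{l,m}$.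 The Dirac operator is $D=|D|\otimes F$ with $|D|\ket{l,m}=(l+\tfrac12)\ket{l,m}$ and $F=\begin{pmatrix}0&1\\1&0\end{pmatrix}$, grading $\gamma=\mathrm{diag}(1,-1)$. With $\rho_-=(\pi_+-\pi_-)/2$, the commutator $[F,\pi(x)]=2\rho_-(x)\otimes\begin{pmatrix}0&-1\\1&0\end{pmatrix}$ is trace class, so the cocycle $\mathrm{ch}^F_0(x)=\tfrac12\mathrm{Trace}(\gamma F[F,\pi(x)])=2\,\mathrm{Trace}_{\hat{\mathcal{H}}}\rho_-(x)$ is well defined, and its pairing with $[p']$ equals the index of $p'Fp'$. *)

theory Defs
  imports "HOL-Analysis.Analysis"
begin

text \<open>Basis labels |l,m> of the Hilbert space hat H: l in N + 1/2, m = -l, ..., l.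
  We encode a basis vector by the real pair (l,m).\<close>
definition basis_idx :: "(real \<times> real) set" where
  "basis_idx = {(l,m). \<exists>n::nat. \<exists>k::nat. l = real n + 1/2 \<and> k \<le> 2*n+1 \<and> m = real k - l}"

definition qnum :: "real \<Rightarrow> real \<Rightarrow> real" where
  "qnum q x = (q powr x - q powr (-x)) / (q - inverse q)"

text \<open>Bounded operators on hat H are represented by their matrix coefficients:
  T out in = <out | T | in>.\<close>
type_synonym op = "real \<times> real \<Rightarrow> real \<times> real \<Rightarrow> complex"

definition id_op :: op where
  "id_op x y = (if x = y \<and> x \<in> basis_idx then 1 else 0)"

text \<open>pi_s(a), for sign s = 1 (pi_+) or s = -1 (pi_-).\<close>
definition pi_a :: "real \<Rightarrow> real \<Rightarrow> op" where
  "pi_a q s = (\<lambda>(l',m') (l,m).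
     if (l,m) \<in> basis_idx \<and> (l',m') \<in> basis_idx then complex_of_real
       (if l' = l + 1 \<and> m' = m + 1 then
          q powr (m - l - 1/2) * sqrt (qnum q (l+m+1) * qnum q (l+m+2)) / qnum q (2*l+2)
        else if l' = l - 1 \<and> m' = m + 1 then
          - (q powr (m + l + 1/2)) * sqrt (qnum q (l-m-1) * qnum q (l-m)) / qnum q (2*l)
        else if l' = l \<and> m' = m + 1 then
          s * (1 + q^2) * q powr (m - 1/2) / (qnum q (2*l) * qnum q (2*l+2))
            * sqrt (qnum q (l+m+1) * qnum q (l-m))
        else 0)
     else 0)"

definition pi_b :: "real \<Rightarrow> real \<Rightarrow> op" where
  "pi_b q s = (\<lambda>(l',m') (l,m).
     if (l,m) \<in> basis_idx \<and> (l',m') \<in> basis_idx then complex_of_real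
       (if l' = l + 1 \<and> m' = m then
          - (q powr (m + 1)) * sqrt (qnum q (l+m+1) * qnum q (l-m+1)) / qnum q (2*l+2)
        else if l' = l - 1 \<and> m' = m then
          - (q powr (m + 1)) * sqrt (qnum q (l+m) * qnum q (l-m)) / qnum q (2*l)
        else if l' = l \<and> m' = m then
          s * (qnum q (l-m+1) * qnum q (l+m) - q^2 * qnum q (l-m) * qnum q (l+m+1))
            / (qnum q (2*l) * qnum q (2*l+2))
        else 0)
     else 0)"

definition pi_astar :: "real \<Rightarrow> real \<Rightarrow> op" where
  "pi_astar q s = (\<lambda>x y. cnj (pi_a q s y x))"

definition pi_pprime :: "real \<Rightarrow> real \<Rightarrow> nat \<Rightarrow> nat \<Rightarrow> op" where
  "pi_pprime q s i j = (\<lambda>x y.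
     if i = 0 \<and> j = 0 then (id_op x y + pi_b q s x y) / 2
     else if i = 0 \<and> j = 1 then pi_astar q s x y / 2
     else if i = 1 \<and> j = 0 then pi_a q s x y / 2
     else (id_op x y - complex_of_real (inverse (q^2)) * pi_b q s x y) / 2)"

definition rho_minus :: "(real \<Rightarrow> op) \<Rightarrow> op" where
  "rho_minus P = (\<lambda>x y. (P 1 x y - P (-1) x y) / 2)"

definition trace_hat :: "op \<Rightarrow> complex" where
  "trace_hat T = infsum (\<lambda>k. T k k) basis_idx"

definition chF0 :: "(real \<Rightarrow> op) \<Rightarrow> complex" where
  "chF0 P = 2 * trace_hat (rho_minus P)"

definition chF_pprime :: "real \<Rightarrow> complex" where
  "chF_pprime q = (\<Sum>i<2. chF0 (\<lambda>s. pi_pprime q s i i))"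

end

theory Submission
  imports Defs
begin

definition Bq :: "real \<Rightarrow> real \<Rightarrow> real \<Rightarrow> real" where
  "Bq q l m = (qnum q (l-m+1) * qnum q (l+m) - q^2 * qnum q (l-m) * qnum q (l+m+1))
            / (qnum q (2*l) * qnum q (2*l+2))"

definition Fq :: "real \<Rightarrow> nat \<Rightarrow> nat \<Rightarrow> real" where
  "Fq q n k = ((1-q^2)*(q^(6*n+6) + q^(2*n+2)) - (1-q^4)*q^(2*n+2+2*k))
             / ((1-q^(4*n+2))*(1-q^(4*n+6)))"

lemma qnum_nat: "0 < q \<Longrightarrow> qnum q (real j) = (q^j - inverse (q^j))/(q - inverse q)"
  unfolding qnum_def by (simp add: powr_realpow powr_minus)

lemma pw: "(x::real)^(a*n+b) = x^b * (x^n)^a"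
  by (simp add: power_add flip: power_mult) (simp add: mult.commute)

lemma cancel_k: "(k::real) \<noteq> 0 \<Longrightarrow> (a/k*(b/k) - c*(d/k)*(e/k))/(f/k*(g/k)) = (a*b - c*d*e)/(f*g)"
proof -
  assume k: "k \<noteq> 0"
  have "a/k*(b/k) - c*(d/k)*(e/k) = (a*b-c*d*e)/(k*k)" "f/k*(g/k) = f*g/(k*k)"
    using k by (simp_all add: field_simps)
  then show ?thesis using k by simp
qed

lemma ratio_lemma: "(N0::real) = N1/M \<Longrightarrow> D0 = D1/M \<Longrightarrow> M \<noteq> 0 \<Longrightarrow> N0/D0 = N1/D1"
  by simp

lemma Bq_Fq:
  assumes q: "0 < q" "q < 1" and k: "k \<le> 2*n+1"
  shows "Bq q (real n + 1/2) (real k - real n - 1/2) = Fq q n k"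
proof -
  have e1: "real n + 1/2 - (real k - real n - 1/2) + 1 = real (2*n+2-k)" using k by auto
  have e2: "real n + 1/2 + (real k - real n - 1/2) = real k" by simp
  have e3: "real n + 1/2 - (real k - real n - 1/2) = real (2*n+1-k)" using k by auto
  have e4: "real n + 1/2 + (real k - real n - 1/2) + 1 = real (k+1)" by simp
  have e5: "2*(real n + 1/2) = real (2*n+1)" by simp
  have e6: "2*(real n + 1/2) + 2 = real (2*n+3)" by simp
  have p1: "q^(2*n+2-k) = q^(2*n+2) / q^k" using k q by (simp add: power_diff)
  have p2: "q^(2*n+1-k) = q^(2*n+1) / q^k" using k q by (simp add: power_diff)
  have qq: "q - inverse q \<noteq> 0"
  proof
    assume "q - inverse q = 0"
    then have "q * q = 1" using q by (simp add: field_simps)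
    moreover have "q * q < 1" using q by (smt (verit) mult_less_cancel_left1)
    ultimately show False by simp
  qed
  have d1: "q^(4*n+2) < 1" using power_Suc_less_one[of q "4*n+1"] q by simp
  have d2: "q^(4*n+6) < 1" using power_Suc_less_one[of q "4*n+5"] q by (simp add: add.commute)
  define Y where "Y = q^n"
  define X where "X = q^k"
  have Ypos: "Y > 0" "X > 0" using q by (auto simp: X_def Y_def)
  have w1: "q^(2*n+2) = q^2*Y^2" "q^(2*n+1) = q*Y^2" "q^(2*n+3) = q^3*Y^2" "q^(k+1) = q*X"
    "q^(6*n+6) = q^6*Y^6" "q^(4*n+2) = q^2*Y^4" "q^(4*n+6) = q^6*Y^4" "q^(2*n+2+2*k) = q^2*Y^2*X^2"
    unfolding Y_def X_def using pw[of q 2 n 2] pw[of q 2 n 1] pw[of q 2 n 3] pw[of q 6 n 6] pw[of q 4 n 2] pw[of q 4 n 6]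
     pw[of q 2 k 0] pw[of q 2 n 2]
    by (simp_all add: power_add power2_eq_square algebra_simps) blast
  have Y4: "q^2*Y^4 < 1" "q^6*Y^4 < 1" using d1 d2 w1 by auto
  show ?thesis
    unfolding Bq_def Fq_def e1 e4 e6
    unfolding e2 e3 e5 qnum_nat[OF q(1)] p1 p2 w1
    unfolding X_def[symmetric]
    using q qq Y4 Ypos
    apply (subst cancel_k[OF qq])
    apply (rule ratio_lemma[where M="q^4*Y^4"])
    subgoal by (simp add: field_simps; algebra)
    subgoal by (simp add: field_simps; algebra)
    subgoal by simp
    done
qed

definition gq :: "real \<Rightarrow> nat \<Rightarrow> real" where
  "gq q n = (2*real n+1) * q^(2*n+2) / (q^(4*n+2) - 1)"

lemma sum_Fq:
  assumes q: "0 < q" "q < 1"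
  shows "(\<Sum>k\<le>2*n+1. Fq q n k) = gq q (Suc n) - gq q n"
proof -
  define C where "C = (1-q^2)*(q^(6*n+6) + q^(2*n+2))"
  define E where "E = (1-q^4)*q^(2*n+2)"
  define D where "D = (1-q^(4*n+2))*(1-q^(4*n+6))"
  have F: "Fq q n k = C/D - E/D * (q^2)^k" for k
  proof -
    have "q^(2*n+2+2*k) = q^(2*n+2)*(q^2)^k" by (simp only: power_add power_mult)
    then show ?thesis unfolding Fq_def C_def E_def D_def by (simp only: diff_divide_distrib mult.assoc times_divide_eq_left)
  qed
  have qq: "q^2 < 1" using power_Suc_less_one[of q 1] q by (simp add: numeral_2_eq_2)
  have q2: "q^2 \<noteq> 1" using qq by simp
  have "(\<Sum>k\<le>2*n+1. Fq q n k) = (\<Sum>k<2*n+2. C/D - E/D * (q^2)^k)"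
    by (simp add: F lessThan_Suc_atMost[symmetric])
  also have "\<dots> = (\<Sum>k<2*n+2. C/D) - E/D * (\<Sum>k<2*n+2. (q^2)^k)"
    by (simp only: sum_subtractf sum_distrib_left)
  also have "\<dots> = (2*real n+2)*(C/D) - E/D * ((1 - (q^2)^(2*n+2))/(1-q^2))"
  proof -
    have gp: "(\<Sum>k<2*n+2. (q^2)^k) = (1 - (q^2)^(2*n+2))/(1-q^2)"
      by (simp only: sum_gp_strict if_not_P[OF q2])
    have c: "(\<Sum>k<2*n+2. C/D) = (2*real n+2)*(C/D)" by simp
    show ?thesis by (simp only: gp c)
  qed
  finally have S: "(\<Sum>k\<le>2*n+1. Fq q n k) = (2*real n+2)*(C/D) - E/D * ((1 - (q^2)^(2*n+2))/(1-q^2))" .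
  define Y where "Y = q^n"
  have Ypos: "Y > 0" using q by (simp add: Y_def)
  have d1: "q^(4*n+2) < 1" using power_Suc_less_one[of q "4*n+1"] q by simp
  have d2: "q^(4*n+6) < 1" using power_Suc_less_one[of q "4*n+5"] q by (simp add: add.commute)
  have w1: "q^(2*n+2) = q^2*Y^2" "q^(2*n+4) = q^4*Y^2"
    "q^(6*n+6) = q^6*Y^6" "q^(4*n+2) = q^2*Y^4" "q^(4*n+6) = q^6*Y^4"
    unfolding Y_def
    using pw[of q 2 n 2] pw[of q 2 n 4] pw[of q 6 n 6] pw[of q 4 n 2] pw[of q 4 n 6]
    by simp_all
  have w2: "(q^2)^(2*n+2) = q^4*Y^4"
  proof -
    have "(q^2)^(2*n+2) = (q^(2*n+2))^2" by (simp only: power_mult[symmetric] mult.commute)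
    also have "\<dots> = q^4*Y^4" unfolding w1(1) by (simp add: power_mult_distrib flip: power_mult)
    finally show ?thesis .
  qed
  have Y4: "q^2*Y^4 < 1" "q^6*Y^4 < 1" using d1 d2 w1 by auto
  have gs: "gq q (Suc n) = (2*real n+3) * q^(2*n+4) / (q^(4*n+6) - 1)"
  proof -
    have h: "2 * Suc n + 2 = 2*n+4" "4*Suc n+2 = 4*n+6" by simp_all
    show ?thesis unfolding gq_def h by (simp add: algebra_simps)
  qed
  show ?thesis
  proof -
    define A where "A = 1 - q^2*Y^4"
    define B where "B = 1 - q^6*Y^4"
    have AB: "A \<noteq> 0" "B \<noteq> 0" "1 - q^2 \<noteq> 0" using Y4 qq by (auto simp: A_def B_def)
    have r: "q^2*Y^4 - 1 = -A" "q^6*Y^4 - 1 = -B" "D = A*B" unfolding A_def B_def D_def w1 by simp_all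
    have fin: "(2*real n+2)*(C/D) - E/D * ((1 - (q^2)^(2*n+2))/(1-q^2))
      = (2*real n+3) * q^(2*n+4) / (q^(4*n+6) - 1) - (2*real n+1) * q^(2*n+2) / (q^(4*n+2) - 1)"
      unfolding w1 w2 r
      using AB
      apply (simp add: field_simps)
      unfolding A_def B_def C_def E_def w1
      apply algebra
      done
    show ?thesis unfolding S gs unfolding gq_def by (rule fin)
  qed
qed

lemma Fq_bound:
  assumes q: "0 < q" "q < 1"
  shows "\<bar>Fq q n k\<bar> \<le> 3 * q^(2*n+2) / (1-q^2)^2"
proof -
  have qq: "q^2 < 1" using power_Suc_less_one[of q 1] q by (simp add: numeral_2_eq_2)
  have q4: "q^4 \<le> 1" using q by (simp add: power_le_one)
  have a1: "q^(4*n+2) \<le> q^2" by (rule power_decreasing) (use q in auto)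
  have a2: "q^(4*n+6) \<le> q^2" by (rule power_decreasing) (use q in auto)
  have b1: "q^(6*n+6) \<le> q^(2*n+2)" by (rule power_decreasing) (use q in auto)
  have b2: "q^(2*n+2+2*k) \<le> q^(2*n+2)" by (rule power_decreasing) (use q in auto)
  have pos: "0 \<le> q^(6*n+6)" "0 \<le> q^(2*n+2+2*k)" "0 \<le> q^(2*n+2)" using q by auto
  have den: "(1-q^2)^2 \<le> (1-q^(4*n+2))*(1-q^(4*n+6))"
  proof -
    have "(1-q^2)*(1-q^2) \<le> (1-q^(4*n+2))*(1-q^(4*n+6))"
      by (rule mult_mono) (use a1 a2 qq in auto)
    then show ?thesis by (simp add: power2_eq_square)
  qed
  have dpos: "0 < (1-q^2)^2" using qq by simp
  have num: "\<bar>(1-q^2)*(q^(6*n+6) + q^(2*n+2)) - (1-q^4)*q^(2*n+2+2*k)\<bar> \<le> 3 * q^(2*n+2)"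
  proof -
    have "\<bar>(1-q^2)*(q^(6*n+6) + q^(2*n+2)) - (1-q^4)*q^(2*n+2+2*k)\<bar>
       \<le> (1-q^2)*(q^(6*n+6) + q^(2*n+2)) + (1-q^4)*q^(2*n+2+2*k)"
      using qq q4 pos by (simp add: abs_le_iff)
    also have "\<dots> \<le> 1*(q^(2*n+2) + q^(2*n+2)) + 1*q^(2*n+2)"
      apply (rule add_mono)
      apply (rule mult_mono) using qq q pos b1 apply auto[4]
      apply (rule mult_mono) using q pos b2 q4 by auto
    finally show ?thesis by simp
  qed
  show ?thesis unfolding Fq_def abs_divide
    apply (rule frac_le)
    using num pos den dpos apply auto
    done
qed

lemma summable_nq:
  assumes q: "0 < q" "q < 1"
  shows "summable (\<lambda>n::nat. (real n + 1) * q^(2*n+2))"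
proof -
  have "(\<lambda>n. of_nat n * q^n) \<longlonglongrightarrow> 0" by (rule powser_times_n_limit_0) (use q in auto)
  then have "(\<lambda>n. of_nat (Suc n) * q^(Suc n)) \<longlonglongrightarrow> 0" by (rule LIMSEQ_Suc)
  then have "Bseq (\<lambda>n. of_nat (Suc n) * q^(Suc n))" by (rule convergent_imp_Bseq[OF convergentI])
  then obtain M where M: "M > 0" "\<And>n. norm (of_nat (Suc n) * q^(Suc n)) \<le> M" by (auto elim: BseqE)
  have "summable (\<lambda>n. M * (q * q^n))"
    by (intro summable_mult summable_geometric) (use q in auto)
  moreover have "norm ((real n + 1) * q^(2*n+2)) \<le> M * (q * q^n)" for n
  proof -
    have h: "2*n+2 = Suc n + Suc n" by simp
    have e: "(real n + 1) * q^(2*n+2) = (of_nat (Suc n) * q^(Suc n)) * q^(Suc n)"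
      unfolding h power_add by simp
    have "norm ((real n + 1) * q^(2*n+2)) = norm (of_nat (Suc n) * q^(Suc n)) * q^(Suc n)"
      unfolding e using q by (simp add: abs_mult)
    also have "\<dots> \<le> M * q^(Suc n)" by (rule mult_right_mono[OF M(2)]) (use q in auto)
    finally show ?thesis by simp
  qed
  ultimately show ?thesis using summable_comparison_test'[of "\<lambda>n. M * (q * q^n)" 0 "\<lambda>n. (real n + 1) * q^(2*n+2)"] by blast
qed

lemma gq_lim:
  assumes q: "0 < q" "q < 1"
  shows "gq q \<longlonglongrightarrow> 0"
proof -
  have qq: "q^2 < 1" using power_Suc_less_one[of q 1] q by (simp add: numeral_2_eq_2)
  have t: "(\<lambda>n::nat. (real n + 1) * q^(2*n+2)) \<longlonglongrightarrow> 0"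
    by (rule summable_LIMSEQ_zero[OF summable_nq[OF q]])
  have "(\<lambda>n. 2/(1-q^2) * ((real n + 1) * q^(2*n+2))) \<longlonglongrightarrow> 2/(1-q^2) * 0"
    by (intro tendsto_mult tendsto_const t)
  moreover have "norm (gq q n) \<le> 2/(1-q^2) * ((real n + 1) * q^(2*n+2))" for n
  proof -
    have a1: "q^(4*n+2) \<le> q^2" by (rule power_decreasing) (use q in auto)
    have "norm (gq q n) = (2*real n+1) * q^(2*n+2) / (1 - q^(4*n+2))"
      unfolding gq_def using q a1 qq by (simp add: abs_divide abs_mult minus_divide_right[symmetric] abs_minus_commute)
    also have "\<dots> \<le> (2*real n+2) * q^(2*n+2) / (1 - q^2)"
      apply (rule frac_le) using q a1 qq by (auto intro!: mult_right_mono)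
    also have "\<dots> = 2/(1-q^2) * ((real n + 1) * q^(2*n+2))" by (simp add: algebra_simps divide_inverse)
    finally show ?thesis .
  qed
  ultimately show ?thesis
    using Lim_null_comparison[of "gq q" "\<lambda>n. 2/(1-q^2) * ((real n + 1) * q^(2*n+2))" sequentially]
    by (simp add: always_eventually)
qed

definition Sg :: "(nat \<times> nat) set" where "Sg = Sigma UNIV (\<lambda>n. {..2*n+1})"
definition jm :: "nat \<times> nat \<Rightarrow> real \<times> real" where
  "jm = (\<lambda>(n,k). (real n + 1/2, real k - real n - 1/2))"

lemma bij_jm: "bij_betw jm Sg basis_idx"
proof (rule bij_betw_imageI)
  show "inj_on jm Sg"
    unfolding inj_on_def jm_def Sg_def by auto
  show "jm ` Sg = basis_idx"
  proof
    show "jm ` Sg \<subseteq> basis_idx" unfolding jm_def Sg_def basis_idx_def by force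
    show "basis_idx \<subseteq> jm ` Sg"
    proof
      fix x assume "x \<in> basis_idx"
      then obtain n k where "x = (real n + 1/2, real k - (real n + 1/2))" "k \<le> 2*n+1"
        unfolding basis_idx_def by auto
      then show "x \<in> jm ` Sg" unfolding jm_def Sg_def
        by (intro image_eqI[where x="(n,k)"]) auto
    qed
  qed
qed

lemma F_abs:
  assumes q: "0 < q" "q < 1"
  shows "(\<lambda>p. norm (Fq q (fst p) (snd p))) summable_on Sg"
proof -
  have qq: "q^2 < 1" using power_Suc_less_one[of q 1] q by (simp add: numeral_2_eq_2)
  define h where "h = (\<lambda>n::nat. \<Sum>k\<le>2*n+1. \<bar>Fq q n k\<bar>)"
  have hb: "norm (h n) \<le> 6/(1-q^2)^2 * ((real n + 1) * q^(2*n+2))" for n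
  proof -
    have "norm (h n) = h n" unfolding h_def by simp
    also have "\<dots> \<le> (\<Sum>k\<le>2*n+1. 3 * q^(2*n+2) / (1-q^2)^2)"
      unfolding h_def by (rule sum_mono) (rule Fq_bound[OF q])
    also have "\<dots> = 6/(1-q^2)^2 * ((real n + 1) * q^(2*n+2))"
      by (simp add: algebra_simps divide_inverse)
    finally show ?thesis .
  qed
  have "summable (\<lambda>n. 6/(1-q^2)^2 * ((real n + 1) * q^(2*n+2)))"
    by (rule summable_mult[OF summable_nq[OF q]])
  then have "summable h"
    using summable_comparison_test'[of "\<lambda>n. 6/(1-q^2)^2 * ((real n + 1) * q^(2*n+2))" 0 h] hb by blast
  then have hs: "h summable_on UNIV"
    by (rule summable_nonneg_imp_summable_on) (simp add: h_def sum_nonneg)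
  show ?thesis
    unfolding Sg_def
  proof (rule Infinite_Sum.abs_summable_on_Sigma_iff[where f="\<lambda>p. Fq q (fst p) (snd p)", THEN iffD2], intro conjI ballI)
    show "(\<lambda>y. norm (Fq q (fst (x, y)) (snd (x, y)))) summable_on {..2 * x + 1}" for x by simp
    show "(\<lambda>x. norm (\<Sum>\<^sub>\<infinity>y\<in>{..2 * x + 1}. norm (Fq q (fst (x, y)) (snd (x, y))))) summable_on UNIV"
      using hs unfolding h_def by (simp add: sum_nonneg)
  qed
qed

lemma F_has_sum:
  assumes q: "0 < q" "q < 1"
  shows "((\<lambda>p. Fq q (fst p) (snd p)) has_sum (q^2/(1-q^2))) Sg"
proof -
  let ?f = "\<lambda>p. Fq q (fst p) (snd p)"
  have sm: "?f summable_on Sg" by (rule abs_summable_summable[OF F_abs[OF q]])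
  then have hs: "(?f has_sum infsum ?f Sg) (Sigma UNIV (\<lambda>n. {..2*n+1}))"
    unfolding Sg_def by (rule has_sum_infsum)
  have "((\<lambda>n. \<Sum>k\<le>2*n+1. Fq q n k) has_sum infsum ?f Sg) UNIV"
    by (rule has_sum_SigmaD[OF hs], simp only: fst_conv snd_conv, rule has_sum_finite, simp)
  then have "(\<lambda>n. gq q (Suc n) - gq q n) sums infsum ?f Sg"
    using sum_Fq[OF q] by (simp add: has_sum_imp_sums)
  moreover have "(\<lambda>n. gq q (Suc n) - gq q n) sums (0 - gq q 0)"
    by (rule telescope_sums[OF gq_lim[OF q]])
  ultimately have "infsum ?f Sg = 0 - gq q 0" by (rule sums_unique2)
  also have "\<dots> = q^2/(1-q^2)"
  proof -
    have qq: "q^2 < 1" using power_Suc_less_one[of q 1] q by (simp add: numeral_2_eq_2)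
    have "gq q 0 = q^2/(q^2-1)" unfolding gq_def by (simp add: power2_eq_square)
    also have "\<dots> = - (q^2/(1-q^2))" using qq by (simp add: field_simps)
    finally show ?thesis by simp
  qed
  finally show ?thesis using sm by (metis has_sum_infsum)
qed

lemma pib_diag:
  assumes "k \<in> basis_idx"
  shows "pi_b q s k k = complex_of_real (s * Bq q (fst k) (snd k))"
  using assms by (cases k) (simp add: pi_b_def Bq_def)

lemma id_diag: "k \<in> basis_idx \<Longrightarrow> id_op k k = 1"
  by (simp add: id_op_def)

lemma rho0:
  assumes "k \<in> basis_idx"
  shows "rho_minus (\<lambda>s. pi_pprime q s 0 0) k k = complex_of_real (1/2 * Bq q (fst k) (snd k))"
  using assms unfolding rho_minus_def pi_pprime_def
  by (simp add: pib_diag id_diag field_simps)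

lemma rho1:
  assumes "k \<in> basis_idx"
  shows "rho_minus (\<lambda>s. pi_pprime q s 1 1) k k = complex_of_real (- inverse (q^2) / 2 * Bq q (fst k) (snd k))"
  using assms unfolding rho_minus_def pi_pprime_def
  by (simp add: pib_diag id_diag field_simps)

lemma B_has_sum:
  assumes q: "0 < q" "q < 1"
  shows "((\<lambda>k. Bq q (fst k) (snd k)) has_sum (q^2/(1-q^2))) basis_idx"
proof -
  have "((\<lambda>x. Bq q (fst (jm x)) (snd (jm x))) has_sum (q^2/(1-q^2))) Sg"
  proof (rule has_sum_cong[THEN iffD1, OF _ F_has_sum[OF q]])
    show "\<And>x. x \<in> Sg \<Longrightarrow> Fq q (fst x) (snd x) = Bq q (fst (jm x)) (snd (jm x))"
      unfolding Sg_def jm_def using Bq_Fq[OF q] by auto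
  qed
  then show ?thesis using has_sum_reindex_bij_betw[OF bij_jm] by blast
qed

lemma B_abs:
  assumes q: "0 < q" "q < 1"
  shows "(\<lambda>k. norm (Bq q (fst k) (snd k))) summable_on basis_idx"
proof -
  have "(\<lambda>x. norm (Bq q (fst (jm x)) (snd (jm x)))) summable_on Sg"
  proof (rule summable_on_cong[THEN iffD1, OF _ F_abs[OF q]])
    show "\<And>x. x \<in> Sg \<Longrightarrow> norm (Fq q (fst x) (snd x)) = norm (Bq q (fst (jm x)) (snd (jm x)))"
      unfolding Sg_def jm_def using Bq_Fq[OF q] by auto
  qed
  then show ?thesis using summable_on_reindex_bij_betw[OF bij_jm] by blast
qed

theorem mainTheorem11:
  fixes q :: real
  assumes "0 < q" and "q < 1"
  shows "(\<forall>i<(2::nat). ((\<lambda>k. norm (rho_minus (\<lambda>s. pi_pprime q s i i) k k)) summable_on basis_idx))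
         \<and> chF_pprime q = - 1 \<and> chF_pprime q \<noteq> 0"
proof -
  note q = assms
  define T where "T = q^2/(1-q^2)"
  let ?B = "\<lambda>k. Bq q (fst k) (snd k)"
  have hB: "(?B has_sum T) basis_idx" unfolding T_def by (rule B_has_sum[OF q])
  have aB: "(\<lambda>k. norm (?B k)) summable_on basis_idx" by (rule B_abs[OF q])
  have s0: "(\<lambda>k. norm (rho_minus (\<lambda>s. pi_pprime q s 0 0) k k)) summable_on basis_idx"
  proof (rule summable_on_cong[THEN iffD1, OF _ summable_on_cmult_right[OF aB, of "1/2"]])
    show "\<And>x. x \<in> basis_idx \<Longrightarrow> 1/2 * norm (?B x) = norm (rho_minus (\<lambda>s. pi_pprime q s 0 0) x x)"
      by (simp add: rho0)
  qed
  have s1: "(\<lambda>k. norm (rho_minus (\<lambda>s. pi_pprime q s 1 1) k k)) summable_on basis_idx"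
  proof (rule summable_on_cong[THEN iffD1, OF _ summable_on_cmult_right[OF aB, of "inverse (q^2) / 2"]])
    fix x assume x: "x \<in> basis_idx"
    show "inverse (q^2) / 2 * norm (?B x) = norm (rho_minus (\<lambda>s. pi_pprime q s 1 1) x x)"
      unfolding rho1[OF x] norm_of_real using q by (simp add: abs_mult)
  qed
  have h0: "((\<lambda>k. rho_minus (\<lambda>s. pi_pprime q s 0 0) k k) has_sum complex_of_real (1/2 * T)) basis_idx"
  proof (rule has_sum_cong[THEN iffD1, OF _ has_sum_bounded_linear[OF bounded_linear_of_real has_sum_cmult_right[OF hB, of "1/2"]]])
    show "\<And>x. x \<in> basis_idx \<Longrightarrow> complex_of_real (1/2 * ?B x) = rho_minus (\<lambda>s. pi_pprime q s 0 0) x x"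
      by (simp add: rho0)
  qed
  have h1: "((\<lambda>k. rho_minus (\<lambda>s. pi_pprime q s 1 1) k k) has_sum complex_of_real (- inverse (q^2) / 2 * T)) basis_idx"
  proof (rule has_sum_cong[THEN iffD1, OF _ has_sum_bounded_linear[OF bounded_linear_of_real has_sum_cmult_right[OF hB, of "- inverse (q^2) / 2"]]])
    fix x assume x: "x \<in> basis_idx"
    show "complex_of_real (- inverse (q^2) / 2 * ?B x) = rho_minus (\<lambda>s. pi_pprime q s 1 1) x x"
      unfolding rho1[OF x] ..
  qed
  have qq: "q^2 < 1" using power_Suc_less_one[of q 1] q by (simp add: numeral_2_eq_2)
  have val: "T + (- inverse (q^2)) * T = -1"
  proof -
    have ne: "1 - q^2 \<noteq> 0" "q^2 \<noteq> 0" using qq q by auto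
    have "inverse (q^2) * T = 1/(1-q^2)" unfolding T_def using ne by simp
    then have "T + (- inverse (q^2)) * T = q^2/(1-q^2) - 1/(1-q^2)" unfolding T_def by simp
    also have "\<dots> = (q^2 - 1)/(1-q^2)" by (simp add: diff_divide_distrib)
    also have "\<dots> = -1" using ne by (simp add: divide_eq_eq)
    finally show ?thesis .
  qed
  have "chF_pprime q = 2 * infsum (\<lambda>k. rho_minus (\<lambda>s. pi_pprime q s 0 0) k k) basis_idx
       + 2 * infsum (\<lambda>k. rho_minus (\<lambda>s. pi_pprime q s 1 1) k k) basis_idx"
    unfolding chF_pprime_def chF0_def trace_hat_def
    by (simp add: numeral_2_eq_2)
  also have "\<dots> = 2 * complex_of_real (1/2 * T) + 2 * complex_of_real (- inverse (q^2) / 2 * T)"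
    by (simp only: infsumI[OF h0] infsumI[OF h1])
  also have "\<dots> = complex_of_real (T + (- inverse (q^2)) * T)" by simp
  also have "\<dots> = -1" unfolding val by simp
  finally have c: "chF_pprime q = -1" .
  have "\<forall>i<(2::nat). ((\<lambda>k. norm (rho_minus (\<lambda>s. pi_pprime q s i i) k k)) summable_on basis_idx)"
  proof (intro allI impI)
    fix i :: nat assume "i < 2"
    then have "i = 0 \<or> i = 1" by auto
    then show "(\<lambda>k. norm (rho_minus (\<lambda>s. pi_pprime q s i i) k k)) summable_on basis_idx"
      using s0 s1 by auto
  qed
  then show ?thesis using c by simp
qed
end
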